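(* There exists a finite relational structure $\mathcal{A}$ with exactly $3$ elements having a Q-core that is not an induced substructure of $\mathcal{A}$.
   Context: Here positive Horn (pH) sentences are first-order sentences built from relational atoms without equality using only $\exists$, $\forall$, $\wedge$. A substructure of $\mathcal{A}$ is a structure $\mathcal{B}$ whose domain is a subset of $A$ and each of whose relations is a subset of the corresponding relation of $\mathcal{A}$ (not necessarily induced). A Q-core of $\mathcal{A}$ is a substructure $\mathcal{B}$ of $\mathcal{A}$ such that $\mathcal{A}$ and $\mathcal{B}$ satisfy exactly the same pH sentences, and which is minimal under inclusion among substructures of $\mathcal{A}$ with this property. *)

theory Defs
  imports Main
begin

text \<open>Relational signatures: relation symbols are natural numbers; a signature is
a finite set Sig of symbols together with an arity function ar.\<close>

record 'a struc =
  dom :: "'a set"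
  rel :: "nat \<Rightarrow> 'a list set"

definition is_struc :: "nat set \<Rightarrow> (nat \<Rightarrow> nat) \<Rightarrow> 'a struc \<Rightarrow> bool" where
  "is_struc Sig ar A \<longleftrightarrow> dom A \<noteq> {} \<and>
     (\<forall>R\<in>Sig. \<forall>t\<in>rel A R. length t = ar R \<and> set t \<subseteq> dom A) \<and>
     (\<forall>R. R \<notin> Sig \<longrightarrow> rel A R = {})"

definition substruc :: "nat set \<Rightarrow> (nat \<Rightarrow> nat) \<Rightarrow> 'a struc \<Rightarrow> 'a struc \<Rightarrow> bool" where
  "substruc Sig ar B A \<longleftrightarrow> is_struc Sig ar B \<and> is_struc Sig ar A \<and>
     dom B \<subseteq> dom A \<and> (\<forall>R\<in>Sig. rel B R \<subseteq> rel A R)"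

definition induced_substruc :: "nat set \<Rightarrow> (nat \<Rightarrow> nat) \<Rightarrow> 'a struc \<Rightarrow> 'a struc \<Rightarrow> bool" where
  "induced_substruc Sig ar B A \<longleftrightarrow> substruc Sig ar B A \<and>
     (\<forall>R\<in>Sig. rel B R = {t \<in> rel A R. set t \<subseteq> dom B})"

text \<open>Positive Horn formulas: atoms (no equality), conjunction, \<exists>, \<forall>.
Variables are natural numbers.\<close>
datatype pH = Atom nat "nat list" | Conj pH pH | Ex nat pH | All nat pH

fun fv :: "pH \<Rightarrow> nat set" where
  "fv (Atom R xs) = set xs"
| "fv (Conj p q) = fv p \<union> fv q"
| "fv (Ex x p) = fv p - {x}"
| "fv (All x p) = fv p - {x}"

fun wf_pH :: "nat set \<Rightarrow> (nat \<Rightarrow> nat) \<Rightarrow> pH \<Rightarrow> bool" where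
  "wf_pH Sig ar (Atom R xs) \<longleftrightarrow> R \<in> Sig \<and> length xs = ar R"
| "wf_pH Sig ar (Conj p q) \<longleftrightarrow> wf_pH Sig ar p \<and> wf_pH Sig ar q"
| "wf_pH Sig ar (Ex x p) \<longleftrightarrow> wf_pH Sig ar p"
| "wf_pH Sig ar (All x p) \<longleftrightarrow> wf_pH Sig ar p"

definition pH_sentence :: "nat set \<Rightarrow> (nat \<Rightarrow> nat) \<Rightarrow> pH \<Rightarrow> bool" where
  "pH_sentence Sig ar p \<longleftrightarrow> wf_pH Sig ar p \<and> fv p = {}"

fun sat :: "'a struc \<Rightarrow> (nat \<Rightarrow> 'a) \<Rightarrow> pH \<Rightarrow> bool" where
  "sat A e (Atom R xs) \<longleftrightarrow> map e xs \<in> rel A R"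
| "sat A e (Conj p q) \<longleftrightarrow> sat A e p \<and> sat A e q"
| "sat A e (Ex x p) \<longleftrightarrow> (\<exists>a\<in>dom A. sat A (e(x := a)) p)"
| "sat A e (All x p) \<longleftrightarrow> (\<forall>a\<in>dom A. sat A (e(x := a)) p)"

text \<open>Truth of a sentence (independent of the assignment for sentences).\<close>
definition models :: "'a struc \<Rightarrow> pH \<Rightarrow> bool" where
  "models A p \<longleftrightarrow> (\<forall>e. (\<forall>v. e v \<in> dom A) \<longrightarrow> sat A e p)"

definition pH_equiv :: "nat set \<Rightarrow> (nat \<Rightarrow> nat) \<Rightarrow> 'a struc \<Rightarrow> 'a struc \<Rightarrow> bool" where
  "pH_equiv Sig ar A B \<longleftrightarrow> (\<forall>p. pH_sentence Sig ar p \<longrightarrow> (models A p \<longleftrightarrow> models B p))"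

definition Q_core :: "nat set \<Rightarrow> (nat \<Rightarrow> nat) \<Rightarrow> 'a struc \<Rightarrow> 'a struc \<Rightarrow> bool" where
  "Q_core Sig ar B A \<longleftrightarrow> substruc Sig ar B A \<and> pH_equiv Sig ar A B \<and>
     (\<forall>C. substruc Sig ar C A \<and> pH_equiv Sig ar A C \<and> substruc Sig ar C B \<longrightarrow> C = B)"

end

theory Submission
  imports Defs
begin

lemma hyper_sat:
  assumes g1: "\<forall>a\<in>dom A. g a \<noteq> {} \<and> g a \<subseteq> dom B"
    and g2: "\<forall>b\<in>dom B. \<exists>a\<in>dom A. b \<in> g a"
    and g3: "\<forall>R t t'. t \<in> rel A R \<longrightarrow> list_all2 (\<lambda>x y. y \<in> g x) t t' \<longrightarrow> t' \<in> rel B R"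
  shows "sat A e \<phi> \<Longrightarrow> (\<forall>v. e v \<in> dom A) \<Longrightarrow> (\<forall>v. e' v \<in> g (e v)) \<Longrightarrow> sat B e' \<phi>"
proof (induction \<phi> arbitrary: e e')
  case (Atom R xs)
  have "list_all2 (\<lambda>x y. y \<in> g x) (map e xs) (map e' xs)"
    using Atom.prems(3) by (induction xs) auto
  then show ?case using Atom.prems(1) g3 by auto
next
  case (Conj p q) then show ?case by auto
next
  case (Ex x p)
  then obtain a where a: "a \<in> dom A" "sat A (e(x := a)) p" by auto
  then obtain b where b: "b \<in> g a" using g1 by blast
  have "sat B (e'(x := b)) p"
    using Ex.IH[OF a(2)] Ex.prems a b by auto
  moreover have "b \<in> dom B" using g1 a b by blast
  ultimately show ?case by auto
next
  case (All x p)
  show ?case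
  proof (simp, intro ballI)
    fix b assume "b \<in> dom B"
    then obtain a where a: "a \<in> dom A" "b \<in> g a" using g2 by blast
    have "sat A (e(x := a)) p" using All.prems(1) a by auto
    then show "sat B (e'(x := b)) p" using All.IH All.prems a by auto
  qed
qed

lemma hyper_models:
  assumes g1: "\<forall>a\<in>dom A. g a \<noteq> {} \<and> g a \<subseteq> dom B"
    and g2: "\<forall>b\<in>dom B. \<exists>a\<in>dom A. b \<in> g a"
    and g3: "\<forall>R t t'. t \<in> rel A R \<longrightarrow> list_all2 (\<lambda>x y. y \<in> g x) t t' \<longrightarrow> t' \<in> rel B R"
    and m: "models A \<phi>"
  shows "models B \<phi>"
  unfolding models_def
proof (intro allI impI)
  fix e' :: "nat \<Rightarrow> _" assume e': "\<forall>v. e' v \<in> dom B"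
  define e where "e = (\<lambda>v::nat. SOME a. a \<in> dom A \<and> e' v \<in> g a)"
  have e: "e v \<in> dom A \<and> e' v \<in> g (e v)" for v
    unfolding e_def by (rule someI_ex) (use g2 e' in blast)
  then have "sat A e \<phi>" using m unfolding models_def by blast
  then show "sat B e' \<phi>" using hyper_sat[OF g1 g2 g3] e by blast
qed

definition AA :: "nat struc" where
  "AA = \<lparr>dom = {0,1,2}, rel = (\<lambda>R. if R = 0 then {[0,0],[0,1]} else {})\<rparr>"
definition BB :: "nat struc" where
  "BB = \<lparr>dom = {0,1}, rel = (\<lambda>R. if R = 0 then {[0,0]} else {})\<rparr>"

lemma la2_2: "list_all2 P [a,b] t' \<longleftrightarrow> (\<exists>x y. t' = [x,y] \<and> P a x \<and> P b y)"
  by (cases t'; simp; case_tac list; auto)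

lemma AB: "models AA p \<Longrightarrow> models BB p"
  apply (rule hyper_models[where g = "\<lambda>a. if a = 2 then {1} else {0}"])
  by (auto simp: AA_def BB_def la2_2 split: if_splits)

lemma BA: "models BB p \<Longrightarrow> models AA p"
  apply (rule hyper_models[where g = "\<lambda>a. if a = 1 then {1,2} else {0}"])
  by (auto simp: AA_def BB_def la2_2 split: if_splits)

definition s1 where "s1 = Ex 0 (Atom 0 [0,0])"
definition s2 where "s2 = All 0 (Atom 0 [0,0])"

lemma models_s1: "dom C \<noteq> {} \<Longrightarrow> models C s1 \<longleftrightarrow> (\<exists>c\<in>dom C. [c,c] \<in> rel C 0)"
  unfolding models_def s1_def
  by auto

lemma models_s2: "dom C \<noteq> {} \<Longrightarrow> models C s2 \<longleftrightarrow> (\<forall>c\<in>dom C. [c,c] \<in> rel C 0)"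
  unfolding models_def s2_def
  by auto

lemma sent: "pH_sentence {0} (\<lambda>_. 2) s1" "pH_sentence {0} (\<lambda>_. 2) s2"
  by (auto simp: pH_sentence_def s1_def s2_def)

lemma sA: "is_struc {0} (\<lambda>_. 2) AA" by (auto simp: is_struc_def AA_def)
lemma sB: "is_struc {0} (\<lambda>_. 2) BB" by (auto simp: is_struc_def BB_def)
lemma subB: "substruc {0} (\<lambda>_. 2) BB AA"
  unfolding substruc_def using sA sB by (simp add: AA_def BB_def)
lemma nind: "\<not> induced_substruc {0} (\<lambda>_. 2) BB AA"
proof
  assume "induced_substruc {0} (\<lambda>_. 2) BB AA"
  then have e: "rel BB 0 = {t \<in> rel AA 0. set t \<subseteq> dom BB}" unfolding induced_substruc_def by blast
  have m: "[0,1] \<in> {t \<in> rel AA 0. set t \<subseteq> dom BB}" by (simp add: AA_def BB_def)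
  have "[0,1] \<in> rel BB 0" by (simp only: e m)
  moreover have "[0,1] \<notin> rel BB 0" by (simp add: BB_def)
  ultimately show False by (rule notE[rotated])
qed

lemma eqAB: "pH_equiv {0} (\<lambda>_. 2) AA BB"
  unfolding pH_equiv_def using AB BA by blast
lemma m1A: "models AA s1" by (subst models_s1) (auto simp: AA_def)
lemma m2A: "\<not> models AA s2" by (subst models_s2) (auto simp: AA_def)

lemma minimal:
  fixes C :: "nat struc"
  assumes H1: "substruc {0} (\<lambda>_. 2) C AA" and H2: "pH_equiv {0} (\<lambda>_. 2) AA C"
    and H3: "substruc {0} (\<lambda>_. 2) C BB"
  shows "C = BB"
proof -
  have sC: "is_struc {0} (\<lambda>_. 2) C" using H1 unfolding substruc_def by blast
  then have ne: "dom C \<noteq> {}" unfolding is_struc_def by blast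
  have "dom C \<subseteq> dom BB" using H3 unfolding substruc_def by blast
  then have dC: "dom C \<subseteq> {0,1}" by (simp add: BB_def)
  have "rel C 0 \<subseteq> rel BB 0" using H3 unfolding substruc_def by blast
  then have rC: "rel C 0 \<subseteq> {[0,0]}" by (simp add: BB_def)
  have all: "\<forall>R. R \<notin> {0::nat} \<longrightarrow> rel C R = {}" using sC unfolding is_struc_def by (elim conjE)
  have rO: "R \<noteq> 0 \<Longrightarrow> rel C R = {}" for R using all by simp
  have "models C s1" proof -
    have "pH_sentence {0} (\<lambda>_. 2) s1 \<longrightarrow> (models AA s1 \<longleftrightarrow> models C s1)"
      using H2 unfolding pH_equiv_def by (rule spec)
    then show ?thesis using m1A sent(1) by simp
  qed
  then obtain c where "c \<in> dom C" "[c,c] \<in> rel C 0" using models_s1[OF ne] by blast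
  then have r0: "rel C 0 = {[0,0]}" and c0: "0 \<in> dom C" using rC by auto
  have "\<not> models C s2" proof -
    have "pH_sentence {0} (\<lambda>_. 2) s2 \<longrightarrow> (models AA s2 \<longleftrightarrow> models C s2)"
      using H2 unfolding pH_equiv_def by (rule spec)
    then show ?thesis using m2A sent(2) by simp
  qed
  then obtain d where "d \<in> dom C" "[d,d] \<notin> rel C 0" using models_s2[OF ne] by blast
  then have "1 \<in> dom C" using dC r0 by auto
  then have dd: "dom C = {0,1}" using dC c0 by auto
  have rr: "rel C = rel BB"
  proof
    fix R show "rel C R = rel BB R" using r0 rO[of R] by (cases "R = 0") (simp_all add: BB_def)
  qed
  have "dom C = dom BB" using dd by (simp add: BB_def)
  moreover have "struc.more C = struc.more BB" by simp
  ultimately show "C = BB" using rr by (intro struc.equality) simp_all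
qed

lemma qc: "Q_core {0} (\<lambda>_. 2) BB AA"
  unfolding Q_core_def using subB eqAB minimal by blast

theorem mainTheorem17:
  shows "\<exists>(Sig :: nat set) (ar :: nat \<Rightarrow> nat) (A :: nat struc) B.
           finite Sig \<and> is_struc Sig ar A \<and> finite (dom A) \<and> card (dom A) = 3 \<and>
           Q_core Sig ar B A \<and> \<not> induced_substruc Sig ar B A"
  apply (rule exI[of _ "{0::nat}"], rule exI[of _ "\<lambda>_. 2"], rule exI[of _ AA], rule exI[of _ BB])
  using sA qc nind by (simp add: AA_def)

end
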